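(* Let $1\le t\le n$. If $S\subseteq N$ is an equivalence class with respect to connectedness within some $t$-switchable subset of $N$, then the ideal $\tilde{\mathcal{I}}^{\langle t\rangle}_S=(f_{i,a,b}: i\in[t],\ a,b\text{ connected in } S)$ of $R$ is prime.
   Context: Fix positive integers $n, r_1,\dots,r_n$, let $N=[r_1]\times\cdots\times[r_n]$, and let $R$ be the polynomial ring over a field in the variables $x_a$, $a\in N$. For $a,b\in N$ and $i\in[n]$, ${\rm s}(i,a,b)\in N$ has $i$-th component $b_i$ and other components equal to those of $a$. Let $d(a,b)=\#\{j: a_j\neq b_j\}$ and $f_{i,a,b}=x_ax_b-x_{{\rm s}(i,a,b)}x_{{\rm s}(i,b,a)}$. A subset $T\subseteq N$ is $t$-switchable if for all $a,b\in T$ with $d(a,b)=2$ and all $i\in[t]$, ${\rm s}(i,a,b)\in T$. Elements $a,b$ of a subset $T$ are connected in $T$ if there are $a_0=a,\dots,a_k=b$ in $T$ with $d(a_{j-1},a_j)\le 1$ for all $j$; this is an equivalence relation on $T$. *)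

theory Defs
  imports "HOL-Library.Poly_Mapping" "HOL-Algebra.Ideal"
begin

text \<open>Index set N = [r_1] x ... x [r_n], encoded as lists a of length n = length r with
  coordinates a!j in {0..<r!j} (0-based coordinates and 0-based positions j < n).\<close>
definition gridN :: "nat list \<Rightarrow> nat list set" where
  "gridN r = {a. length a = length r \<and> (\<forall>j<length r. a ! j < r ! j)}"

definition sw :: "nat \<Rightarrow> nat list \<Rightarrow> nat list \<Rightarrow> nat list" where
  "sw i a b = a[i := b ! i]"

definition hdist :: "nat list \<Rightarrow> nat list \<Rightarrow> nat" where
  "hdist a b = card {j. j < length a \<and> a ! j \<noteq> b ! j}"

text \<open>t-switchable: i ranges over [t] = {0..<t} in 0-based positions.\<close>
definition switchable :: "nat list \<Rightarrow> nat \<Rightarrow> nat list set \<Rightarrow> bool" where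
  "switchable r t T \<longleftrightarrow> T \<subseteq> gridN r \<and>
     (\<forall>a\<in>T. \<forall>b\<in>T. hdist a b = 2 \<longrightarrow> (\<forall>i<t. sw i a b \<in> T))"

definition connected_in :: "nat list set \<Rightarrow> nat list \<Rightarrow> nat list \<Rightarrow> bool" where
  "connected_in T a b \<longleftrightarrow> a \<in> T \<and> b \<in> T \<and>
     (\<lambda>x y. x \<in> T \<and> y \<in> T \<and> hdist x y \<le> 1)\<^sup>*\<^sup>* a b"

definition conn_class :: "nat list set \<Rightarrow> nat list \<Rightarrow> nat list set" where
  "conn_class T a = {b. connected_in T a b}"

type_synonym 'k mpoly = "(nat list \<Rightarrow>\<^sub>0 nat) \<Rightarrow>\<^sub>0 'k"

definition Var :: "nat list \<Rightarrow> 'k::field mpoly" where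
  "Var a = Poly_Mapping.single (Poly_Mapping.single a 1) 1"

definition fpoly :: "nat \<Rightarrow> nat list \<Rightarrow> nat list \<Rightarrow> 'k::field mpoly" where
  "fpoly i a b = Var a * Var b - Var (sw i a b) * Var (sw i b a)"

definition polyR :: "nat list \<Rightarrow> 'k::field mpoly ring" where
  "polyR r = \<lparr>carrier = {p. \<forall>m\<in>Poly_Mapping.keys p. Poly_Mapping.keys m \<subseteq> gridN r},
              monoid.mult = (*), one = 1, zero = 0, add = (+)\<rparr>"

definition Itilde :: "nat list \<Rightarrow> nat \<Rightarrow> nat list set \<Rightarrow> 'k::field mpoly set" where
  "Itilde r t S = genideal (polyR r) {fpoly i a b | i a b. i < t \<and> connected_in S a b}"

end

theory Submission
  imports Defs "HOL-Library.List_Lexorder"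
begin


lemma hdist_sym: "length a = length b \<Longrightarrow> hdist a b = hdist b a"
  unfolding hdist_def by (metis)

lemma diffset_finite: "finite {j. j < length x \<and> x ! j \<noteq> y ! j}" by simp

lemma hdist_le1:
  assumes "length x = length y" "hdist x y \<le> 1" "x \<noteq> y"
  shows "\<exists>j<length x. x!j \<noteq> y!j \<and> (\<forall>k<length x. k \<noteq> j \<longrightarrow> x!k = y!k)"
proof -
  let ?D = "{j. j < length x \<and> x ! j \<noteq> y ! j}"
  have ne: "?D \<noteq> {}" using assms(1,3) nth_equalityI by blast
  have "card ?D \<le> 1" using assms(2) unfolding hdist_def .
  moreover have "card ?D \<noteq> 0" using ne diffset_finite[of x y] card_0_eq by blast
  ultimately have "card ?D = 1" by linarith
  then obtain j where "?D = {j}" using card_1_singletonE by blast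
  then show ?thesis by blast
qed

lemma hdist_eq_card: "hdist x y = card {j. j < length x \<and> x ! j \<noteq> y ! j}"
  by (simp add: hdist_def)

lemma hdist_two:
  assumes "i < length x" "j < length x" "i \<noteq> j" "x!i \<noteq> y!i" "x!j \<noteq> y!j"
    "\<forall>k<length x. k \<noteq> i \<and> k \<noteq> j \<longrightarrow> x!k = y!k"
  shows "hdist x y = 2"
proof -
  have "{j. j < length x \<and> x ! j \<noteq> y ! j} = {i, j}" using assms by auto
  then show ?thesis using assms(3) by (simp add: hdist_def)
qed

lemma hdist_one:
  assumes "i < length x" "x!i \<noteq> y!i"
    "\<forall>k<length x. k \<noteq> i \<longrightarrow> x!k = y!k"
  shows "hdist x y = 1"
proof -
  have "{j. j < length x \<and> x ! j \<noteq> y ! j} = {i}" using assms by auto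
  then show ?thesis by (simp add: hdist_def)
qed

lemma hdist_self: "hdist x x = 0" by (simp add: hdist_def)

locale cls =
  fixes r :: "nat list" and t :: nat and T S :: "nat list set" and a0 :: "nat list"
  assumes tn: "t \<le> length r" and swT: "switchable r t T" and a0T: "a0 \<in> T"
    and Sdef: "S = conn_class T a0"
begin

lemma T_grid: "x \<in> T \<Longrightarrow> x \<in> gridN r"
  using swT by (auto simp: switchable_def)

lemma T_len: "x \<in> T \<Longrightarrow> length x = length r"
  using T_grid by (auto simp: gridN_def)

lemma S_mem: "x \<in> S \<longleftrightarrow> connected_in T a0 x"
  by (simp add: Sdef conn_class_def)

lemma S_T: "x \<in> S \<Longrightarrow> x \<in> T"
  by (simp add: S_mem connected_in_def)

lemma S_grid: "x \<in> S \<Longrightarrow> x \<in> gridN r" using S_T T_grid by blast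
lemma S_len: "x \<in> S \<Longrightarrow> length x = length r" using S_T T_len by blast

lemma a0S: "a0 \<in> S" using a0T by (simp add: S_mem connected_in_def)

lemma S_ext: "y \<in> S \<Longrightarrow> z \<in> T \<Longrightarrow> hdist y z \<le> 1 \<Longrightarrow> z \<in> S"
  unfolding S_mem connected_in_def
  by (auto intro: rtranclp.rtrancl_into_rtrancl)

abbreviation stS where "stS \<equiv> (\<lambda>x y. x \<in> S \<and> y \<in> S \<and> hdist x y \<le> 1)"

lemma a0_path: "x \<in> S \<Longrightarrow> stS\<^sup>*\<^sup>* a0 x"
proof -
  assume "x \<in> S"
  then have "(\<lambda>x y. x \<in> T \<and> y \<in> T \<and> hdist x y \<le> 1)\<^sup>*\<^sup>* a0 x"
    by (simp add: S_mem connected_in_def)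
  then show "stS\<^sup>*\<^sup>* a0 x"
  proof (induction rule: rtranclp_induct)
    case base then show ?case by simp
  next
    case (step y z)
    have yS: "y \<in> S" using step.hyps a0T by (simp add: S_mem connected_in_def)
    have zS: "z \<in> S" using S_ext[OF yS] step.hyps(2) by blast
    show ?case using step.IH yS zS step.hyps(2) by (auto intro: rtranclp.rtrancl_into_rtrancl)
  qed
qed

lemma stS_sym: "stS\<^sup>*\<^sup>* x y \<Longrightarrow> stS\<^sup>*\<^sup>* y x"
proof (induction rule: rtranclp_induct)
  case base then show ?case by simp
next
  case (step y z)
  have "stS z y" using step.hyps(2) hdist_sym S_len by metis
  then show ?case using step.IH by (auto intro: rtranclp.rtrancl_into_rtrancl converse_rtranclp_into_rtranclp)
qed

lemma S_conn: "x \<in> S \<Longrightarrow> y \<in> S \<Longrightarrow> connected_in S x y"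
  unfolding connected_in_def
  using a0_path stS_sym by (meson rtranclp_trans)

lemma edge_fib:
  assumes xS: "x \<in> S" and yS: "y \<in> S" and d: "hdist x y \<le> 1" and it: "i < t"
    and v: "x[i := v] \<in> S"
  shows "y[i := v] \<in> S"
proof (cases "x = y")
  case True then show ?thesis using v by simp
next
  case False
  have lx: "length x = length r" and ly: "length y = length r" using xS yS S_len by auto
  have il: "i < length x" using it tn lx by simp
  obtain j where j: "j < length x" "x!j \<noteq> y!j" "\<forall>k<length x. k \<noteq> j \<longrightarrow> x!k = y!k"
    using hdist_le1[OF _ d False] lx ly by auto
  show ?thesis
  proof (cases "j = i")
    case True
    have "y[i := v] = x[i := v]"
      by (rule nth_equalityI) (use lx ly j True in \<open>auto simp: nth_list_update\<close>)
    then show ?thesis using v by simp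
  next
    case ji: False
    show ?thesis
    proof (cases "v = x!i")
      case True
      then have "y[i:=v] = y" using j ji il lx ly by simp
      then show ?thesis using yS by simp
    next
      case vne: False
      let ?c = "x[i := v]"
      have cT: "?c \<in> T" using v S_T by blast
      have "hdist y ?c = 2"
        by (rule hdist_two[of i _ j]) (use lx ly j ji il vne in \<open>auto simp: nth_list_update\<close>)
      then have "sw i y ?c \<in> T" using swT it yS cT S_T by (auto simp: switchable_def)
      moreover have "sw i y ?c = y[i := v]" using il by (simp add: sw_def)
      ultimately have zT: "y[i:=v] \<in> T" by simp
      have "hdist y (y[i:=v]) \<le> 1"
      proof (cases "y!i = v")
        case True then have "y[i:=v] = y" by (metis list_update_id)
        then show ?thesis by (simp add: hdist_self)
      next
        case False
        have "hdist y (y[i:=v]) = 1"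
          by (rule hdist_one[of i]) (use False il lx ly in \<open>auto simp: nth_list_update\<close>)
        then show ?thesis by simp
      qed
      then show ?thesis using S_ext[OF yS zT] by simp
    qed
  qed
qed

lemma path_fib:
  assumes "stS\<^sup>*\<^sup>* x y" "i < t" "x[i := v] \<in> S"
  shows "y[i := v] \<in> S"
  using assms
proof (induction rule: rtranclp_induct)
  case base then show ?case by simp
next
  case (step y z) then show ?case using edge_fib by blast
qed

lemma S_closed:
  assumes "a \<in> S" "b \<in> S" "i < t"
  shows "sw i a b \<in> S"
proof -
  have "b[i := b!i] \<in> S" using assms by simp
  moreover have "stS\<^sup>*\<^sup>* b a" using S_conn[OF assms(2,1)] by (simp add: connected_in_def)
  ultimately show ?thesis using path_fib assms(3) by (simp add: sw_def)
qed

end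


lemma keys_sum_nat:
  "finite A \<Longrightarrow> k \<in> Poly_Mapping.keys (\<Sum>x\<in>A. (f x :: 'a \<Rightarrow>\<^sub>0 nat)) \<longleftrightarrow> (\<exists>x\<in>A. k \<in> Poly_Mapping.keys (f x))"
  by (simp add: in_keys_iff lookup_sum)

lemma keys_add_nat: "Poly_Mapping.keys (p + q :: 'a \<Rightarrow>\<^sub>0 nat) = Poly_Mapping.keys p \<union> Poly_Mapping.keys q"
  by (auto simp: in_keys_iff lookup_add)

lemma poly_expand: "p = (\<Sum>m\<in>Poly_Mapping.keys p. Poly_Mapping.single m (poly_mapping.lookup p m))"
  by (rule poly_mapping_eqI) (simp add: lookup_sum lookup_single when_def in_keys_iff sum.delta)

context cls begin

definition g :: "nat list \<Rightarrow> (nat list \<Rightarrow>\<^sub>0 nat)" where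
  "g a = (if a \<in> S then (\<Sum>i<t. Poly_Mapping.single [0,i,a!i] 1) + Poly_Mapping.single (1 # drop t a) 1
          else Poly_Mapping.single (2 # a) 1)"

definition psi :: "(nat list \<Rightarrow>\<^sub>0 nat) \<Rightarrow> (nat list \<Rightarrow>\<^sub>0 nat)" where
  "psi m = (\<Sum>a\<in>Poly_Mapping.keys m. \<Sum>_\<in>{..<poly_mapping.lookup m a}. g a)"

lemma lookup_psi: "poly_mapping.lookup (psi m) k = (\<Sum>a\<in>Poly_Mapping.keys m. poly_mapping.lookup m a * poly_mapping.lookup (g a) k)"
  by (simp add: psi_def lookup_sum)

lemma lookup_psi_super:
  assumes "finite A" "Poly_Mapping.keys m \<subseteq> A"
  shows "poly_mapping.lookup (psi m) k = (\<Sum>a\<in>A. poly_mapping.lookup m a * poly_mapping.lookup (g a) k)"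
  unfolding lookup_psi
  by (rule sum.mono_neutral_left) (use assms in \<open>auto simp: in_keys_iff\<close>)

lemma psi_add: "psi (m + n) = psi m + psi n"
proof (rule poly_mapping_eqI)
  fix k
  let ?A = "Poly_Mapping.keys m \<union> Poly_Mapping.keys n"
  have f: "finite ?A" by simp
  have "poly_mapping.lookup (psi (m+n)) k = (\<Sum>a\<in>?A. poly_mapping.lookup (m+n) a * poly_mapping.lookup (g a) k)"
    by (rule lookup_psi_super) (auto simp: keys_add_nat)
  also have "\<dots> = (\<Sum>a\<in>?A. poly_mapping.lookup m a * poly_mapping.lookup (g a) k) + (\<Sum>a\<in>?A. poly_mapping.lookup n a * poly_mapping.lookup (g a) k)"
    by (simp add: lookup_add distrib_right sum.distrib)
  also have "\<dots> = poly_mapping.lookup (psi m) k + poly_mapping.lookup (psi n) k"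
    by (simp add: lookup_psi_super[OF f])
  finally show "poly_mapping.lookup (psi (m+n)) k = poly_mapping.lookup (psi m + psi n) k" by (simp add: lookup_add)
qed

lemma psi_zero[simp]: "psi 0 = 0" by (simp add: psi_def)

lemma psi_single[simp]: "psi (Poly_Mapping.single a 1) = g a"
  by (simp add: psi_def)

lemma keys_psi: "k \<in> Poly_Mapping.keys (psi m) \<longleftrightarrow> (\<exists>a\<in>Poly_Mapping.keys m. k \<in> Poly_Mapping.keys (g a))"
  by (simp add: in_keys_iff lookup_psi)

lemma keys_gS: "a \<in> S \<Longrightarrow> k \<in> Poly_Mapping.keys (g a) \<longleftrightarrow> (\<exists>i<t. k = [0,i,a!i]) \<or> k = 1 # drop t a"
  by (auto simp: g_def keys_add_nat keys_sum_nat)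

lemma keys_gnS: "a \<notin> S \<Longrightarrow> Poly_Mapping.keys (g a) = {2 # a}"
  by (simp add: g_def)

lemma g_ne: "g a \<noteq> 0"
proof -
  have "Poly_Mapping.keys (g a) \<noteq> {}"
  proof (cases "a \<in> S")
    case True then have "1 # drop t a \<in> Poly_Mapping.keys (g a)" using keys_gS by blast
    then show ?thesis by blast
  qed (simp add: keys_gnS)
  then show ?thesis by auto
qed

lemma g_swap:
  assumes aS: "a \<in> S" and cS: "c \<in> S" and it: "i < t"
  shows "g (sw i a c) + g (sw i c a) = g a + g c"
proof -
  let ?sa = "sw i a c" and ?sc = "sw i c a"
  have saS: "?sa \<in> S" and scS: "?sc \<in> S" using S_closed assms by auto
  have la: "length a = length r" and lc: "length c = length r" using aS cS S_len by auto
  have il: "i < length a" "i < length c" using it tn la lc by auto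
  let ?Y = "\<lambda>x. (\<Sum>j<t. Poly_Mapping.single [0,j,x!j] (1::nat))"
  have Ysum: "?Y ?sa + ?Y ?sc = ?Y a + ?Y c"
  proof -
    have "?Y ?sa + ?Y ?sc = (\<Sum>j<t. Poly_Mapping.single [0,j,?sa!j] 1 + Poly_Mapping.single [0,j,?sc!j] 1)"
      by (simp add: sum.distrib)
    also have "\<dots> = (\<Sum>j<t. Poly_Mapping.single [0,j,a!j] 1 + Poly_Mapping.single [0,j,c!j] 1)"
    proof (rule sum.cong)
      fix j assume "j \<in> {..<t}"
      show "Poly_Mapping.single [0,j,?sa!j] (1::nat) + Poly_Mapping.single [0,j,?sc!j] 1 =
            Poly_Mapping.single [0,j,a!j] 1 + Poly_Mapping.single [0,j,c!j] 1"
        by (cases "j = i") (use il in \<open>auto simp: sw_def nth_list_update add.commute\<close>)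
    qed simp
    also have "\<dots> = ?Y a + ?Y c" by (simp add: sum.distrib)
    finally show ?thesis .
  qed
  have da: "drop t ?sa = drop t a" and dc: "drop t ?sc = drop t c"
    using it by (simp_all add: sw_def)
  show ?thesis
    using saS scS aS cS Ysum da dc unfolding g_def
    by (simp add: ac_simps)
qed

end


context cls begin

definition phi :: "'k::field mpoly \<Rightarrow> 'k mpoly" where
  "phi p = (\<Sum>m\<in>Poly_Mapping.keys p. Poly_Mapping.single (psi m) (poly_mapping.lookup p m))"

lemma phi_super:
  assumes "finite A" "Poly_Mapping.keys p \<subseteq> A"
  shows "phi p = (\<Sum>m\<in>A. Poly_Mapping.single (psi m) (poly_mapping.lookup p m))"
  unfolding phi_def
  by (rule sum.mono_neutral_left) (use assms in \<open>auto simp: in_keys_iff\<close>)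

lemma phi_add: "phi (p + q) = phi p + phi q"
proof -
  let ?A = "Poly_Mapping.keys p \<union> Poly_Mapping.keys q"
  have f: "finite ?A" by simp
  have "phi (p + q) = (\<Sum>m\<in>?A. Poly_Mapping.single (psi m) (poly_mapping.lookup (p+q) m))"
    by (rule phi_super) (use keys_add[of p q] in auto)
  also have "\<dots> = phi p + phi q"
    by (simp add: phi_super[OF f] lookup_add single_add sum.distrib)
  finally show ?thesis .
qed

lemma phi_zero[simp]: "phi 0 = 0" by (simp add: phi_def)

lemma phi_single[simp]: "phi (Poly_Mapping.single m c) = Poly_Mapping.single (psi m) c"
  by (cases "c = 0") (simp_all add: phi_def)

lemma phi_sum: "finite A \<Longrightarrow> phi (\<Sum>x\<in>A. f x) = (\<Sum>x\<in>A. phi (f x))"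
  by (induction A rule: finite_induct) (simp_all add: phi_add)

lemma phi_mult: "phi (p * q) = phi p * phi q"
proof -
  let ?P = "Poly_Mapping.keys p" and ?Q = "Poly_Mapping.keys q"
  have "p * q = (\<Sum>m\<in>?P. Poly_Mapping.single m (poly_mapping.lookup p m)) *
                (\<Sum>m\<in>?Q. Poly_Mapping.single m (poly_mapping.lookup q m))"
    by (metis poly_expand)
  also have "\<dots> = (\<Sum>m\<in>?P. \<Sum>n\<in>?Q. Poly_Mapping.single (m + n) (poly_mapping.lookup p m * poly_mapping.lookup q n))"
    by (simp add: sum_product mult_single)
  finally have pq: "p * q = \<dots>" .
  have "phi (p*q) = (\<Sum>m\<in>?P. \<Sum>n\<in>?Q. Poly_Mapping.single (psi m + psi n) (poly_mapping.lookup p m * poly_mapping.lookup q n))"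
    by (simp add: pq phi_sum psi_add)
  also have "\<dots> = (\<Sum>m\<in>?P. Poly_Mapping.single (psi m) (poly_mapping.lookup p m)) *
                (\<Sum>m\<in>?Q. Poly_Mapping.single (psi m) (poly_mapping.lookup q m))"
    by (simp add: sum_product mult_single)
  finally show ?thesis by (simp add: phi_def)
qed

lemma phi_one[simp]: "phi 1 = 1"
  by (metis phi_single psi_zero single_one)

lemma phi_diff: "phi (p - q) = phi p - phi q"
  by (metis add_diff_cancel diff_add_cancel phi_add)

lemma lookup_phi: "poly_mapping.lookup (phi p) k = (\<Sum>m\<in>{m\<in>Poly_Mapping.keys p. psi m = k}. poly_mapping.lookup p m)"
  unfolding phi_def lookup_sum lookup_single
  by (simp add: when_def sum.inter_filter[symmetric])

end


lemma polyR_carrier: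
  "p \<in> carrier (polyR r) \<longleftrightarrow> (\<forall>m\<in>Poly_Mapping.keys p. Poly_Mapping.keys m \<subseteq> gridN r)"
  by (simp add: polyR_def)

lemma polyR_mult[simp]: "monoid.mult (polyR r) = (*)" unfolding polyR_def by simp
lemma polyR_add[simp]: "add (polyR r) = (+)" unfolding polyR_def by simp
lemma polyR_zero[simp]: "zero (polyR r) = 0" unfolding polyR_def by simp
lemma polyR_one[simp]: "one (polyR r) = 1" unfolding polyR_def by simp

lemma car_add: "p \<in> carrier (polyR r) \<Longrightarrow> q \<in> carrier (polyR r) \<Longrightarrow> p + q \<in> carrier (polyR r)"
proof -
  assume a: "p \<in> carrier (polyR r)" "q \<in> carrier (polyR r)"
  have "Poly_Mapping.keys (p + q) \<subseteq> Poly_Mapping.keys p \<union> Poly_Mapping.keys q" by (rule keys_add)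
  then show ?thesis using a unfolding polyR_carrier by blast
qed

lemma car_mult:
  assumes "p \<in> carrier (polyR r)" "q \<in> carrier (polyR r)"
  shows "p * q \<in> carrier (polyR r)"
  unfolding polyR_carrier
proof
  fix m assume "m \<in> Poly_Mapping.keys (p * q)"
  then obtain a b where "m = a + b" "a \<in> Poly_Mapping.keys p" "b \<in> Poly_Mapping.keys q"
    using keys_mult[of p q] by blast
  then show "Poly_Mapping.keys m \<subseteq> gridN r" using assms by (auto simp: polyR_carrier keys_add_nat)
qed

lemma car_uminus: "p \<in> carrier (polyR r) \<Longrightarrow> - p \<in> carrier (polyR r)"
  unfolding polyR_carrier by simp

lemma car_diff: "p \<in> carrier (polyR r) \<Longrightarrow> q \<in> carrier (polyR r) \<Longrightarrow> p - q \<in> carrier (polyR r)"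
  using car_add car_uminus by (metis diff_conv_add_uminus)

lemma car_zero: "0 \<in> carrier (polyR r)" by (simp add: polyR_carrier)
lemma car_one: "1 \<in> carrier (polyR r)" by (simp add: polyR_carrier)

lemma car_single: "Poly_Mapping.keys m \<subseteq> gridN r \<Longrightarrow> Poly_Mapping.single m c \<in> carrier (polyR r)"
  by (simp add: polyR_carrier)

lemma car_const: "Poly_Mapping.single 0 c \<in> carrier (polyR r)"
  by (simp add: polyR_carrier)

lemma cring_polyR: "cring (polyR r :: 'k::field mpoly ring)"
proof (rule cringI)
  show "abelian_group (polyR r :: 'k mpoly ring)"
  proof (rule abelian_groupI)
    fix x assume "x \<in> carrier (polyR r :: 'k mpoly ring)"
    then show "\<exists>y\<in>carrier (polyR r :: 'k mpoly ring). y \<oplus>\<^bsub>polyR r\<^esub> x = \<zero>\<^bsub>polyR r\<^esub>"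
      by (intro bexI[of _ "- x"]) (simp_all add: car_uminus)
  qed (simp_all add: car_add car_zero add.assoc add.commute)
  show "comm_monoid (polyR r :: 'k mpoly ring)"
    by (rule comm_monoidI) (simp_all add: car_mult car_one mult.assoc mult.commute)
qed (simp add: distrib_right)

lemma ring_polyR: "ring (polyR r :: 'k::field mpoly ring)"
  using cring_polyR cring.axioms(1) by blast

definition bin :: "(nat list \<Rightarrow>\<^sub>0 nat) \<Rightarrow> (nat list \<Rightarrow>\<^sub>0 nat) \<Rightarrow> 'k::field mpoly" where
  "bin m m' = Poly_Mapping.single m 1 - Poly_Mapping.single m' 1"

lemma fpoly_bin: "fpoly i a b = bin (Poly_Mapping.single a 1 + Poly_Mapping.single b 1)
   (Poly_Mapping.single (sw i a b) 1 + Poly_Mapping.single (sw i b a) 1)"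
  by (simp add: fpoly_def bin_def Var_def mult_single)

lemma bin_shift: "bin (x + m) (x + m') = Poly_Mapping.single x 1 * bin m m'"
  by (simp add: bin_def mult_single right_diff_distrib)

lemma bin_trans: "bin m m' + bin m' m'' = bin m m''"
  by (simp add: bin_def)

lemma bin_refl: "bin m m = 0" by (simp add: bin_def)

context cls begin

abbreviation Gs :: "'k::field mpoly set" where
  "Gs \<equiv> {fpoly i a b | i a b. i < t \<and> connected_in S a b}"

lemma Gs_carrier: "(Gs :: 'k::field mpoly set) \<subseteq> carrier (polyR r)"
proof
  fix f :: "'k mpoly" assume "f \<in> Gs"
  then obtain i a b where f: "f = fpoly i a b" "i < t" "connected_in S a b" by blast
  have ab: "a \<in> S" "b \<in> S" using f(3) by (auto simp: connected_in_def)
  have "sw i a b \<in> S" "sw i b a \<in> S" using S_closed ab f(2) by auto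
  then have g: "a \<in> gridN r" "b \<in> gridN r" "sw i a b \<in> gridN r" "sw i b a \<in> gridN r"
    using ab S_grid by auto
  show "f \<in> carrier (polyR r)" unfolding f fpoly_bin bin_def
    by (rule car_diff; rule car_single) (use g in \<open>auto simp: keys_add_nat\<close>)
qed

lemma I_ideal: "ideal (Itilde r t S :: 'k::field mpoly set) (polyR r)"
  unfolding Itilde_def by (rule ring.genideal_ideal[OF ring_polyR Gs_carrier])

lemma Gs_I: "(Gs :: 'k::field mpoly set) \<subseteq> Itilde r t S"
  unfolding Itilde_def by (rule ring.genideal_self[OF ring_polyR Gs_carrier])

lemma I_add: "x \<in> Itilde r t S \<Longrightarrow> y \<in> Itilde r t S \<Longrightarrow> (x + y :: 'k::field mpoly) \<in> Itilde r t S"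
  using additive_subgroup.a_closed[OF ideal.axioms(1)[OF I_ideal]] by fastforce

lemma I_lmult: "a \<in> Itilde r t S \<Longrightarrow> x \<in> carrier (polyR r) \<Longrightarrow> (x * a :: 'k::field mpoly) \<in> Itilde r t S"
  using ideal.I_l_closed[OF I_ideal] by fastforce

lemma I_sub: "(Itilde r t S :: 'k::field mpoly set) \<subseteq> carrier (polyR r)"
  using additive_subgroup.a_subset[OF ideal.axioms(1)[OF I_ideal]] by blast

lemma I_zero: "(0 :: 'k::field mpoly) \<in> Itilde r t S"
  using additive_subgroup.zero_closed[OF ideal.axioms(1)[OF I_ideal]] by fastforce

lemma I_sum: "finite A \<Longrightarrow> (\<And>x. x \<in> A \<Longrightarrow> f x \<in> Itilde r t S) \<Longrightarrow> (\<Sum>x\<in>A. f x :: 'k::field mpoly) \<in> Itilde r t S"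
  by (induction A rule: finite_induct) (auto simp: I_zero I_add)

end


definition deg :: "('a \<Rightarrow>\<^sub>0 nat) \<Rightarrow> nat" where
  "deg m = sum (poly_mapping.lookup m) (Poly_Mapping.keys m)"

lemma deg_super: "finite A \<Longrightarrow> Poly_Mapping.keys m \<subseteq> A \<Longrightarrow> deg m = sum (poly_mapping.lookup m) A"
  unfolding deg_def by (rule sum.mono_neutral_left) (auto simp: in_keys_iff)

lemma deg_add: "deg (m + n) = deg m + deg n"
proof -
  let ?A = "Poly_Mapping.keys m \<union> Poly_Mapping.keys n"
  have f: "finite ?A" by simp
  show ?thesis
    by (simp add: deg_super[OF f] keys_add_nat lookup_add sum.distrib)
qed

lemma deg_single1: "deg (Poly_Mapping.single b (1::nat)) = 1"
  by (simp add: deg_def)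

lemma decomp1: "b \<in> Poly_Mapping.keys (m :: 'a \<Rightarrow>\<^sub>0 nat) \<Longrightarrow> m = Poly_Mapping.single b 1 + (m - Poly_Mapping.single b 1)"
  by (rule poly_mapping_eqI) (auto simp: lookup_add lookup_minus lookup_single when_def in_keys_iff)

lemma keys_minus_sub: "Poly_Mapping.keys (m - Poly_Mapping.single b 1 :: 'a \<Rightarrow>\<^sub>0 nat) \<subseteq> Poly_Mapping.keys m"
  by (auto simp: in_keys_iff lookup_minus)

lemma keys_minus_other: "c \<in> Poly_Mapping.keys (m :: 'a \<Rightarrow>\<^sub>0 nat) \<Longrightarrow> c \<noteq> b \<Longrightarrow> c \<in> Poly_Mapping.keys (m - Poly_Mapping.single b 1)"
  by (auto simp: in_keys_iff lookup_minus lookup_single when_def)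

context cls begin

lemma bin_add_I:
  assumes "(bin x y :: 'k::field mpoly) \<in> Itilde r t S" "Poly_Mapping.keys z \<subseteq> gridN r"
  shows "(bin (z + x) (z + y) :: 'k mpoly) \<in> Itilde r t S"
  unfolding bin_shift by (rule I_lmult[OF assms(1) car_single[OF assms(2)]])

lemma bin_trans_I:
  assumes "(bin x y :: 'k::field mpoly) \<in> Itilde r t S" "(bin y z :: 'k mpoly) \<in> Itilde r t S"
  shows "(bin x z :: 'k mpoly) \<in> Itilde r t S"
  using I_add[OF assms] by (simp add: bin_trans)

lemma bin_gen_I:
  assumes "i < t" "a \<in> S" "c \<in> S"
  shows "(bin (Poly_Mapping.single a 1 + Poly_Mapping.single c 1)
     (Poly_Mapping.single (sw i a c) 1 + Poly_Mapping.single (sw i c a) 1) :: 'k::field mpoly) \<in> Itilde r t S"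
proof -
  have conn: "connected_in S a c" by (rule S_conn[OF assms(2,3)])
  have "(fpoly i a c :: 'k mpoly) \<in> Gs" unfolding mem_Collect_eq using assms(1) conn by blast
  then have "(fpoly i a c :: 'k mpoly) \<in> Itilde r t S" using Gs_I by (rule subsetD[rotated])
  then show ?thesis by (simp only: fpoly_bin)
qed

lemma swap_step:
  assumes aK: "a \<in> Poly_Mapping.keys m" and cK: "c \<in> Poly_Mapping.keys m" and ac: "a \<noteq> c"
    and aS: "a \<in> S" and cS: "c \<in> S" and it: "i < t" and mg: "Poly_Mapping.keys m \<subseteq> gridN r"
  shows "\<exists>m2. (bin m m2 :: 'k::field mpoly) \<in> Itilde r t S \<and> psi m2 = psi m \<and>
     Poly_Mapping.keys m2 \<subseteq> gridN r \<and> sw i a c \<in> Poly_Mapping.keys m2"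
proof -
  let ?e = "\<lambda>x. Poly_Mapping.single x (1::nat)"
  define m' where "m' = m - ?e a"
  define rest where "rest = m' - ?e c"
  have m1: "m = ?e a + m'" unfolding m'_def by (rule decomp1[OF aK])
  have cK': "c \<in> Poly_Mapping.keys m'" unfolding m'_def using keys_minus_other[OF cK] ac by auto
  have m2: "m' = ?e c + rest" unfolding rest_def by (rule decomp1[OF cK'])
  have mm: "m = rest + (?e a + ?e c)" using m1 m2 by (simp add: ac_simps)
  have rk: "Poly_Mapping.keys rest \<subseteq> gridN r"
    using keys_minus_sub[of m' c] keys_minus_sub[of m a] mg unfolding rest_def m'_def by blast
  define y where "y = ?e (sw i a c) + ?e (sw i c a)"
  have sS: "sw i a c \<in> S" "sw i c a \<in> S" using S_closed aS cS it by auto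
  have "(bin (rest + (?e a + ?e c)) (rest + y) :: 'k mpoly) \<in> Itilde r t S"
    by (rule bin_add_I[OF _ rk]) (unfold y_def, rule bin_gen_I[OF it aS cS])
  then have b: "(bin m (rest + y) :: 'k mpoly) \<in> Itilde r t S" using mm by simp
  have "psi (rest + y) = psi rest + (g (sw i a c) + g (sw i c a))"
    by (simp only: y_def psi_add psi_single)
  also have "\<dots> = psi rest + (g a + g c)" using g_swap[OF aS cS it] by simp
  also have "\<dots> = psi m" using mm by (simp only: psi_add psi_single)
  finally have p: "psi (rest + y) = psi m" .
  have k: "Poly_Mapping.keys (rest + y) \<subseteq> gridN r"
    using rk sS S_grid by (auto simp: y_def keys_add_nat)
  have s: "sw i a c \<in> Poly_Mapping.keys (rest + y)" by (simp add: y_def keys_add_nat)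
  show ?thesis using b p k s by blast
qed

lemma align:
  assumes bS: "b \<in> S" and aK: "a \<in> Poly_Mapping.keys m" and aS: "a \<in> S"
    and ad: "drop t a = drop t b" and mg: "Poly_Mapping.keys m \<subseteq> gridN r"
    and bm: "\<forall>i<t. [0,i,b!i] \<in> Poly_Mapping.keys (psi m)"
  shows "k \<le> t \<Longrightarrow> \<exists>m1 a1. (bin m m1 :: 'k::field mpoly) \<in> Itilde r t S \<and> psi m1 = psi m \<and>
     Poly_Mapping.keys m1 \<subseteq> gridN r \<and> a1 \<in> Poly_Mapping.keys m1 \<and> a1 \<in> S \<and>
     drop t a1 = drop t b \<and> (\<forall>j<k. a1!j = b!j)"
proof (induction k)
  case 0
  have "(bin m m :: 'k mpoly) \<in> Itilde r t S" by (simp add: bin_refl I_zero)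
  then show ?case
    by (rule_tac exI[of _ m], rule_tac exI[of _ a]) (simp add: aK aS ad mg)
next
  case (Suc k)
  then obtain m1 a1 where H: "(bin m m1 :: 'k mpoly) \<in> Itilde r t S" "psi m1 = psi m"
     "Poly_Mapping.keys m1 \<subseteq> gridN r" "a1 \<in> Poly_Mapping.keys m1" "a1 \<in> S"
     "drop t a1 = drop t b" "\<forall>j<k. a1!j = b!j" by auto
  have kt: "k < t" using Suc.prems by simp
  show ?case
  proof (cases "a1!k = b!k")
    case True
    then have "\<forall>j<Suc k. a1!j = b!j" using H(7) less_Suc_eq by auto
    then show ?thesis
      by (rule_tac exI[of _ m1], rule_tac exI[of _ a1]) (simp only: H(1-6) simp_thms)
  next
    case False
    have "[0,k,b!k] \<in> Poly_Mapping.keys (psi m1)" using bm kt H(2) by simp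
    then obtain c where cK: "c \<in> Poly_Mapping.keys m1" and cg: "[0,k,b!k] \<in> Poly_Mapping.keys (g c)"
      using keys_psi by blast
    have cS: "c \<in> S"
    proof (rule ccontr)
      assume "c \<notin> S" then show False using cg keys_gnS by simp
    qed
    have ck: "c!k = b!k" using cg keys_gS[OF cS] by auto
    have ac: "a1 \<noteq> c" using False ck by auto
    obtain m2 where M: "(bin m1 m2 :: 'k mpoly) \<in> Itilde r t S" "psi m2 = psi m1"
      "Poly_Mapping.keys m2 \<subseteq> gridN r" "sw k a1 c \<in> Poly_Mapping.keys m2"
      using swap_step[OF H(4) cK ac H(5) cS kt H(3)] by blast
    have la: "k < length a1" using H(5) S_len kt tn by simp
    have s1: "sw k a1 c \<in> S" using S_closed H(5) cS kt by blast
    have s2: "drop t (sw k a1 c) = drop t b" using H(6) kt by (simp add: sw_def)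
    have s3: "\<forall>j<Suc k. (sw k a1 c)!j = b!j"
    proof (intro allI impI)
      fix j assume "j < Suc k"
      then consider "j < k" | "j = k" by linarith
      then show "(sw k a1 c)!j = b!j"
      proof cases
        case 1 then show ?thesis using H(7) by (simp add: sw_def)
      next
        case 2 then show ?thesis using la ck by (simp add: sw_def)
      qed
    qed
    have b2: "(bin m m2 :: 'k mpoly) \<in> Itilde r t S" using bin_trans_I[OF H(1) M(1)] .
    have p2: "psi m2 = psi m" using M(2) H(2) by simp
    show ?thesis
      apply (rule exI[of _ m2], rule exI[of _ "sw k a1 c"])
      apply (intro conjI)
            apply (rule b2)
           apply (rule p2)
          apply (rule M(3))
         apply (rule M(4))
        apply (rule s1)
       apply (rule s2)
      apply (rule s3)
      done
  qed
qed

lemma fiber: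
  "\<forall>m m'. deg m' = n \<longrightarrow> Poly_Mapping.keys m \<subseteq> gridN r \<longrightarrow> Poly_Mapping.keys m' \<subseteq> gridN r \<longrightarrow>
     psi m = psi m' \<longrightarrow> (bin m m' :: 'k::field mpoly) \<in> Itilde r t S"
proof (induction n rule: less_induct)
  case (less n)
  show ?case
  proof (intro allI impI)
    fix m m' :: "nat list \<Rightarrow>\<^sub>0 nat"
    assume dn: "deg m' = n" and mg: "Poly_Mapping.keys m \<subseteq> gridN r"
      and mg': "Poly_Mapping.keys m' \<subseteq> gridN r" and pe: "psi m = psi m'"
    show "(bin m m' :: 'k mpoly) \<in> Itilde r t S"
    proof (cases "m' = 0")
      case True
      have "m = 0"
      proof (rule ccontr)
        assume "m \<noteq> 0"
        then have "Poly_Mapping.keys m \<noteq> {}" by simp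
        then obtain a where aK: "a \<in> Poly_Mapping.keys m" by blast
        have "Poly_Mapping.keys (g a) \<noteq> {}" using g_ne[of a] by simp
        then obtain k where kg: "k \<in> Poly_Mapping.keys (g a)" by blast
        have "k \<in> Poly_Mapping.keys (psi m)" unfolding keys_psi using aK kg by blast
        then show False using pe True by simp
      qed
      then show ?thesis using True by (simp add: bin_refl I_zero)
    next
      case False
      then have "Poly_Mapping.keys m' \<noteq> {}" by simp
      then obtain b where bK: "b \<in> Poly_Mapping.keys m'" by blast
      have kpm: "k \<in> Poly_Mapping.keys (psi m)" if kk: "k \<in> Poly_Mapping.keys (g b)" for k
      proof -
        have "\<exists>a\<in>Poly_Mapping.keys m'. k \<in> Poly_Mapping.keys (g a)" using bK kk by blast
        then show ?thesis unfolding pe keys_psi .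
      qed
      obtain m1 where M: "(bin m m1 :: 'k mpoly) \<in> Itilde r t S" "psi m1 = psi m"
        "Poly_Mapping.keys m1 \<subseteq> gridN r" "b \<in> Poly_Mapping.keys m1"
      proof (cases "b \<in> S")
        case bS: True
        have "1 # drop t b \<in> Poly_Mapping.keys (psi m)" using kpm keys_gS[OF bS] by blast
        then obtain a where aK: "a \<in> Poly_Mapping.keys m" and ag: "1 # drop t b \<in> Poly_Mapping.keys (g a)"
          unfolding keys_psi by blast
        have aS: "a \<in> S"
        proof (rule ccontr)
          assume "a \<notin> S" then show False using ag keys_gnS by simp
        qed
        have ad: "drop t a = drop t b" using ag keys_gS[OF aS] by auto
        have bm: "\<forall>i<t. [0,i,b!i] \<in> Poly_Mapping.keys (psi m)" using kpm keys_gS[OF bS] by blast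
        obtain m1 a1 where A: "(bin m m1 :: 'k mpoly) \<in> Itilde r t S" "psi m1 = psi m"
          "Poly_Mapping.keys m1 \<subseteq> gridN r" "a1 \<in> Poly_Mapping.keys m1" "a1 \<in> S"
          "drop t a1 = drop t b" "\<forall>j<t. a1!j = b!j"
          using align[OF bS aK aS ad mg bm, of t, OF order_refl] by blast
        have "a1 = b"
        proof (rule nth_equalityI)
          show "length a1 = length b" using A(5) bS S_len by simp
          fix j assume j: "j < length a1"
          show "a1!j = b!j"
          proof (cases "j < t")
            case True then show ?thesis using A(7) by simp
          next
            case False
            have "drop t a1 ! (j - t) = drop t b ! (j - t)" using A(6) by simp
            moreover have "length a1 = length b" using A(5) bS S_len by simp
            ultimately show ?thesis using False j tn by simp
          qed
        qed
        then show ?thesis using that A by blast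
      next
        case bnS: False
        have "2 # b \<in> Poly_Mapping.keys (psi m)" using kpm keys_gnS[OF bnS] by blast
        then obtain a where aK: "a \<in> Poly_Mapping.keys m" and ag: "2 # b \<in> Poly_Mapping.keys (g a)"
          unfolding keys_psi by blast
        have "a = b"
        proof (cases "a \<in> S")
          case True then show ?thesis using ag keys_gS by auto
        next
          case False then show ?thesis using ag keys_gnS by auto
        qed
        moreover have "(bin m m :: 'k mpoly) \<in> Itilde r t S" by (simp add: bin_refl I_zero)
        ultimately show ?thesis using that aK mg by blast
      qed
      let ?e = "Poly_Mapping.single b (1::nat)"
      define x where "x = m1 - ?e"
      define y where "y = m' - ?e"
      have mx: "m1 = ?e + x" unfolding x_def by (rule decomp1[OF M(4)])
      have my: "m' = ?e + y" unfolding y_def by (rule decomp1[OF bK])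
      have "psi (?e + x) = psi (?e + y)" using M(2) pe by (simp only: mx[symmetric] my[symmetric])
      then have "psi ?e + psi x = psi ?e + psi y" by (simp only: psi_add)
      then have pxy: "psi x = psi y" by simp
      have dy: "deg y < n" using dn my deg_add[of ?e y] deg_single1[of b] by simp
      have xg: "Poly_Mapping.keys x \<subseteq> gridN r" using M(3) keys_minus_sub[of m1 b] unfolding x_def by (rule subset_trans[rotated])
      have yg: "Poly_Mapping.keys y \<subseteq> gridN r" using mg' keys_minus_sub[of m' b] unfolding y_def by (rule subset_trans[rotated])
      have "(bin x y :: 'k mpoly) \<in> Itilde r t S" using less.IH[OF dy, rule_format, of y x, OF refl xg yg pxy] .
      moreover have "Poly_Mapping.keys ?e \<subseteq> gridN r" using bK mg' by auto
      ultimately have "(bin (?e + x) (?e + y) :: 'k mpoly) \<in> Itilde r t S" by (rule bin_add_I)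
      then have "(bin m1 m' :: 'k mpoly) \<in> Itilde r t S" using mx my by simp
      then show ?thesis using bin_trans_I[OF M(1)] by blast
    qed
  qed
qed

end


context cls begin

lemma kernel_I:
  assumes pc: "p \<in> carrier (polyR r)" and p0: "phi (p :: 'k::field mpoly) = 0"
  shows "p \<in> Itilde r t S"
proof -
  let ?K = "Poly_Mapping.keys p"
  let ?c = "poly_mapping.lookup p"
  define R where "R v = (SOME m0. m0 \<in> ?K \<and> psi m0 = v)" for v
  define rep where "rep m = R (psi m)" for m
  have rep: "rep m \<in> ?K \<and> psi (rep m) = psi m" if "m \<in> ?K" for m
    unfolding rep_def R_def by (rule someI[of _ m]) (use that in simp)
  have kg: "Poly_Mapping.keys m \<subseteq> gridN r" if "m \<in> ?K" for m
    using pc that by (simp add: polyR_carrier)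
  have split: "p = (\<Sum>m\<in>?K. Poly_Mapping.single m (?c m) - Poly_Mapping.single (rep m) (?c m))
               + (\<Sum>m\<in>?K. Poly_Mapping.single (rep m) (?c m))"
    by (simp add: sum_subtractf) (rule poly_expand)
  have z: "(\<Sum>m\<in>?K. Poly_Mapping.single (rep m) (?c m)) = 0"
  proof (rule poly_mapping_eqI)
    fix x
    have "poly_mapping.lookup (\<Sum>m\<in>?K. Poly_Mapping.single (rep m) (?c m)) x
          = (\<Sum>m\<in>{m\<in>?K. rep m = x}. ?c m)"
      by (simp add: lookup_sum lookup_single when_def sum.inter_filter[symmetric])
    also have "\<dots> = 0"
    proof (cases "\<exists>m1\<in>?K. rep m1 = x")
      case True
      then obtain m1 where m1: "m1 \<in> ?K" "rep m1 = x" by blast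
      have eq: "rep m = x \<longleftrightarrow> psi m = psi m1" if mK: "m \<in> ?K" for m
      proof
        assume "rep m = x"
        then have "psi (rep m) = psi (rep m1)" using m1 by simp
        then show "psi m = psi m1" using rep[OF mK] rep[OF m1(1)] by simp
      next
        assume "psi m = psi m1"
        then show "rep m = x" using m1 by (simp add: rep_def)
      qed
      have "{m\<in>?K. rep m = x} = {m\<in>?K. psi m = psi m1}" using eq by blast
      then have "(\<Sum>m\<in>{m\<in>?K. rep m = x}. ?c m) = poly_mapping.lookup (phi p) (psi m1)"
        by (simp add: lookup_phi)
      then show ?thesis using p0 by simp
    next
      case False
      then have e: "{m\<in>?K. rep m = x} = {}" by blast
      show ?thesis by (simp only: e sum.empty)
    qed
    finally show "poly_mapping.lookup (\<Sum>m\<in>?K. Poly_Mapping.single (rep m) (?c m)) x = poly_mapping.lookup 0 x"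
      by simp
  qed
  have "(\<Sum>m\<in>?K. Poly_Mapping.single m (?c m) - Poly_Mapping.single (rep m) (?c m)) \<in> Itilde r t S"
  proof (rule I_sum)
    fix m assume mK: "m \<in> ?K"
    have "(bin m (rep m) :: 'k mpoly) \<in> Itilde r t S"
    proof -
      have r1: "rep m \<in> ?K" and r2: "psi (rep m) = psi m" using rep[OF mK] by auto
      have r3: "psi m = psi (rep m)" using r2 by simp
      show ?thesis by (rule fiber[rule_format, OF refl kg[OF mK] kg[OF r1] r3])
    qed
    then have "Poly_Mapping.single 0 (?c m) * bin m (rep m) \<in> Itilde r t S"
      by (rule I_lmult[OF _ car_const])
    moreover have "Poly_Mapping.single 0 (?c m) * bin m (rep m) =
       Poly_Mapping.single m (?c m) - Poly_Mapping.single (rep m) (?c m)"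
      by (simp add: bin_def right_diff_distrib mult_single)
    ultimately show "Poly_Mapping.single m (?c m) - Poly_Mapping.single (rep m) (?c m) \<in> Itilde r t S"
      by simp
  qed simp
  then show ?thesis using split z by simp
qed

definition Ker :: "'k::field mpoly set" where
  "Ker = {p \<in> carrier (polyR r). phi p = 0}"

lemma Ker_ideal: "ideal (Ker :: 'k::field mpoly set) (polyR r)"
proof -
  interpret R: cring "polyR r :: 'k mpoly ring" by (rule cring_polyR)
  have neg: "\<ominus>\<^bsub>polyR r\<^esub> x = - x" if "x \<in> carrier (polyR r)" for x :: "'k mpoly"
    by (rule R.minus_equality) (simp_all add: that car_uminus)
  show ?thesis
  proof (rule idealI[OF R.ring_axioms])
    show "subgroup (Ker :: 'k mpoly set) (add_monoid (polyR r))"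
    proof (rule R.add.subgroupI)
      show "(Ker :: 'k mpoly set) \<subseteq> carrier (polyR r)" by (auto simp: Ker_def)
      show "(Ker :: 'k mpoly set) \<noteq> {}" using car_zero by (auto simp: Ker_def)
    next
      fix a :: "'k mpoly"
      assume a: "a \<in> Ker"
      then have ac: "a \<in> carrier (polyR r)" "phi a = 0" by (auto simp: Ker_def)
      have "phi (- a) = 0" using phi_diff[of 0 a] ac by simp
      then show "\<ominus>\<^bsub>polyR r\<^esub> a \<in> Ker" using ac car_uminus neg[OF ac(1)] by (simp add: Ker_def)
    next
      fix a b :: "'k mpoly"
      assume "a \<in> Ker" "b \<in> Ker"
      then show "a \<oplus>\<^bsub>polyR r\<^esub> b \<in> Ker"
        by (auto simp: Ker_def phi_add car_add)
    qed
  next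
    fix a x :: "'k mpoly" assume "a \<in> Ker" "x \<in> carrier (polyR r)"
    then show "x \<otimes>\<^bsub>polyR r\<^esub> a \<in> Ker"
      by (auto simp: Ker_def phi_mult car_mult)
  next
    fix a x :: "'k mpoly" assume "a \<in> Ker" "x \<in> carrier (polyR r)"
    then show "a \<otimes>\<^bsub>polyR r\<^esub> x \<in> Ker"
      by (auto simp: Ker_def phi_mult car_mult)
  qed
qed

lemma Gs_Ker: "(Gs :: 'k::field mpoly set) \<subseteq> Ker"
proof
  fix f :: "'k mpoly" assume fG: "f \<in> Gs"
  then obtain i a b where f: "f = fpoly i a b" "i < t" "connected_in S a b" by blast
  have ab: "a \<in> S" "b \<in> S" using f(3) by (auto simp: connected_in_def)
  have "phi f = 0"
    unfolding f fpoly_bin bin_def phi_diff phi_single psi_add psi_single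
    using g_swap[OF ab f(2)] by simp
  then show "f \<in> Ker" using Gs_carrier fG by (auto simp: Ker_def)
qed

lemma I_Ker: "(Itilde r t S :: 'k::field mpoly set) \<subseteq> Ker"
  unfolding Itilde_def by (rule ring.genideal_minimal[OF ring_polyR Ker_ideal Gs_Ker])

lemma prime: "primeideal (Itilde r t S :: 'k::field mpoly set) (polyR r)"
proof (rule primeidealI[OF I_ideal cring_polyR])
  have "(1 :: 'k mpoly) \<notin> Itilde r t S" using I_Ker by (auto simp: Ker_def)
  then show "carrier (polyR r) \<noteq> (Itilde r t S :: 'k mpoly set)" using car_one by blast
next
  fix a b :: "'k mpoly"
  assume ab: "a \<in> carrier (polyR r)" "b \<in> carrier (polyR r)" "a \<otimes>\<^bsub>polyR r\<^esub> b \<in> Itilde r t S"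
  then have "phi (a * b) = 0" using I_Ker by (auto simp: Ker_def)
  then have "phi a = 0 \<or> phi b = 0" by (simp add: phi_mult)
  then show "a \<in> Itilde r t S \<or> b \<in> Itilde r t S" using kernel_I ab by blast
qed

end

theorem theorem4p3:
  fixes r :: "nat list" and t :: nat and T S :: "nat list set"
  assumes "\<forall>j<length r. 0 < r ! j"
    and "1 \<le> t" and "t \<le> length r"
    and "switchable r t T"
    and "\<exists>a\<in>T. S = conn_class T a"
  shows "primeideal (Itilde r t S :: 'k::field mpoly set) (polyR r)"
proof -
  obtain a0 where a0: "a0 \<in> T" "S = conn_class T a0" using assms(5) by blast
  interpret cls r t T S a0 by (unfold_locales) (use assms a0 in auto)
  show ?thesis by (rule prime)
qed

end
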